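(* Let $\Omega_H$ be the infinite hexagonal lattice graph (the infinite 3-regular honeycomb lattice, whose faces are hexagons). Then $\chi_{td}(\Omega_H) = 7$.
   Context: For a (possibly infinite) simple graph $G$ and a positive integer $k$, a proper $k$-total difference labeling of $G$ is a function $f: V(G)\to\{1,\dots,k\}$, extended to edges by $f(\{u,v\}) = |f(u)-f(v)|$, such that: (i) adjacent vertices receive different labels; (ii) two distinct edges sharing a vertex receive different labels; (iii) no edge receives the same label as either of its endpoints. $\chi_{td}(G)$ denotes the smallest $k$ for which $G$ has a proper $k$-total difference labeling. *)

theory Defs
  imports Main
begin

definition simple_graph :: "('a \<Rightarrow> 'a \<Rightarrow> bool) \<Rightarrow> bool" where
  "simple_graph E \<longleftrightarrow> (\<forall>u v. E u v \<longrightarrow> E v u) \<and> (\<forall>u. \<not> E u u)"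

definition proper_td_labeling :: "('a \<Rightarrow> 'a \<Rightarrow> bool) \<Rightarrow> nat \<Rightarrow> ('a \<Rightarrow> int) \<Rightarrow> bool" where
  "proper_td_labeling E k f \<longleftrightarrow>
     (\<forall>v. f v \<in> {1..int k}) \<and>
     (\<forall>u v. E u v \<longrightarrow> f u \<noteq> f v) \<and>
     (\<forall>u v w. E u v \<and> E u w \<and> v \<noteq> w \<longrightarrow> \<bar>f u - f v\<bar> \<noteq> \<bar>f u - f w\<bar>) \<and>
     (\<forall>u v. E u v \<longrightarrow> \<bar>f u - f v\<bar> \<noteq> f u \<and> \<bar>f u - f v\<bar> \<noteq> f v)"

definition chi_td :: "('a \<Rightarrow> 'a \<Rightarrow> bool) \<Rightarrow> nat" where
  "chi_td E = (LEAST k. k > 0 \<and> (\<exists>f. proper_td_labeling E k f))"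

text \<open>Infinite hexagonal (honeycomb) lattice in brick-wall coordinates:
vertices Z x Z; (i,j) is adjacent to (i+1,j), (i-1,j), and to (i,j+1) if i+j is
even, resp. (i,j-1) if i+j is odd.\<close>

definition hex_adj :: "int \<times> int \<Rightarrow> int \<times> int \<Rightarrow> bool" where
  "hex_adj p q \<longleftrightarrow>
     (snd p = snd q \<and> \<bar>fst p - fst q\<bar> = 1) \<or>
     (fst p = fst q \<and> even (fst p + snd p) \<and> snd q = snd p + 1) \<or>
     (fst p = fst q \<and> odd (fst p + snd p) \<and> snd q = snd p - 1)"

lemma hex_simple: "simple_graph hex_adj"
  unfolding simple_graph_def hex_adj_def by auto

end

theory Submission
  imports Defs
begin

definition vn :: "int \<Rightarrow> int \<Rightarrow> int \<times> int" where
  "vn i j = (i, if even (i+j) then j+1 else j-1)"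

lemma adj_iff:
  "hex_adj (i,j) q \<longleftrightarrow> q = (i+1,j) \<or> q = (i-1,j) \<or> q = vn i j"
  by (cases q) (auto simp: hex_adj_def vn_def)

definition okv :: "int \<Rightarrow> int \<Rightarrow> bool" where
  "okv c x \<longleftrightarrow> x \<noteq> c \<and> \<bar>x - c\<bar> \<noteq> x \<and> \<bar>x - c\<bar> \<noteq> c"

lemma rng6: "(c::int) \<in> {1..6} \<Longrightarrow> c = 1 \<or> c = 2 \<or> c = 3 \<or> c = 4 \<or> c = 5 \<or> c = 6"
  by auto

lemma L:
  fixes c x y z :: int
  assumes "c \<in> {1..6}" "x \<in> {1..6}" "y \<in> {1..6}" "z \<in> {1..6}"
    "okv c x" "okv c y" "okv c z"
    "\<bar>x - c\<bar> \<noteq> \<bar>y - c\<bar>" "\<bar>x - c\<bar> \<noteq> \<bar>z - c\<bar>" "\<bar>y - c\<bar> \<noteq> \<bar>z - c\<bar>"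
  shows "c \<noteq> 3 \<and> (c = 2 \<longrightarrow> 3 \<in> {x,y,z}) \<and> (c = 5 \<longrightarrow> 2 \<in> {x,y,z} \<or> 3 \<in> {x,y,z})
     \<and> (c = 1 \<longrightarrow> 3 \<in> {x,y,z} \<or> 5 \<in> {x,y,z}) \<and> (c = 4 \<longrightarrow> 1 \<in> {x,y,z} \<or> 3 \<in> {x,y,z})
     \<and> (c = 6 \<longrightarrow> 1 \<in> {x,y,z} \<or> 2 \<in> {x,y,z})"
  using rng6[OF assms(1)] rng6[OF assms(2)] rng6[OF assms(3)] rng6[OF assms(4)] assms(5-)
  unfolding okv_def by (elim disjE; simp)

definition lab :: "int \<times> int \<Rightarrow> int" where
  "lab p = (if even (snd p) then [1,3,2,7] else [5,7,6,4]) ! nat (fst p mod 4)"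

lemma loc:
  fixes i j :: int
  defines "c \<equiv> lab (i,j)" and "a \<equiv> lab (i+1,j)" and "b \<equiv> lab (i-1,j)"
    and "d \<equiv> lab (vn i j)"
  shows "c \<in> {1..7} \<and> okv c a \<and> okv c b \<and> okv c d \<and> okv a c \<and> okv b c \<and> okv d c \<and>
    \<bar>a - c\<bar> \<noteq> \<bar>b - c\<bar> \<and> \<bar>a - c\<bar> \<noteq> \<bar>d - c\<bar> \<and> \<bar>b - c\<bar> \<noteq> \<bar>d - c\<bar>"
proof -
  have r: "i mod 4 = 0 \<or> i mod 4 = 1 \<or> i mod 4 = 2 \<or> i mod 4 = 3" by presburger
  have p1: "(i+1) mod 4 = (i mod 4 + 1) mod 4" by presburger
  have m1: "(i-1) mod 4 = (i mod 4 + 3) mod 4" by presburger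
  have e: "even (i+j) \<longleftrightarrow> (even (i mod 4) \<longleftrightarrow> even j)" by presburger
  show ?thesis using r unfolding assms lab_def okv_def vn_def
    by (cases "even j") (auto simp: p1 m1 e)
qed

theorem mainTheorem3:
  shows "chi_td hex_adj = 7"
proof -
  have up: "proper_td_labeling hex_adj 7 lab"
    unfolding proper_td_labeling_def
  proof (intro conjI allI impI)
    fix v show "lab v \<in> {1..int 7}" using loc[of "fst v" "snd v"] by simp
  next
    fix u v assume "hex_adj u v"
    moreover obtain i j where u: "u = (i,j)" by (cases u)
    ultimately show "lab u \<noteq> lab v" using loc[of i j]
      by (auto simp: adj_iff okv_def)
  next
    fix u v w assume "hex_adj u v \<and> hex_adj u w \<and> v \<noteq> w"
    moreover obtain i j where u: "u = (i,j)" by (cases u)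
    moreover have "vn i j \<noteq> (i+1,j)" "vn i j \<noteq> (i-1,j)" by (auto simp: vn_def)
    ultimately show "\<bar>lab u - lab v\<bar> \<noteq> \<bar>lab u - lab w\<bar>" using loc[of i j]
      by (auto simp: adj_iff abs_minus_commute)
  next
    fix u v assume "hex_adj u v"
    moreover obtain i j where u: "u = (i,j)" by (cases u)
    ultimately show "\<bar>lab u - lab v\<bar> \<noteq> lab u" using loc[of i j]
      by (auto simp: adj_iff okv_def abs_minus_commute)
  next
    fix u v assume "hex_adj u v"
    moreover obtain i j where u: "u = (i,j)" by (cases u)
    ultimately show "\<bar>lab u - lab v\<bar> \<noteq> lab v" using loc[of i j]
      by (auto simp: adj_iff okv_def abs_minus_commute)
  qed
  have low: False if k: "0 < k" "k < 7" and pf: "proper_td_labeling hex_adj k f" for k f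
  proof -
    have rg: "f v \<in> {1..6}" for v
    proof -
      have "f v \<in> {1..int k}" using pf unfolding proper_td_labeling_def by blast
      moreover have "int k \<le> 6" using k by simp
      ultimately show ?thesis by auto
    qed
    have P: "f (i,j) \<noteq> 3 \<and> (f (i,j) = 2 \<longrightarrow> 3 \<in> {x,y,z}) \<and> (f (i,j) = 5 \<longrightarrow> 2 \<in> {x,y,z} \<or> 3 \<in> {x,y,z})
     \<and> (f (i,j) = 1 \<longrightarrow> 3 \<in> {x,y,z} \<or> 5 \<in> {x,y,z}) \<and> (f (i,j) = 4 \<longrightarrow> 1 \<in> {x,y,z} \<or> 3 \<in> {x,y,z})
     \<and> (f (i,j) = 6 \<longrightarrow> 1 \<in> {x,y,z} \<or> 2 \<in> {x,y,z})"
      if "x = f (i+1,j)" "y = f (i-1,j)" "z = f (vn i j)" for i j x y z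
    proof (rule L)
      let ?u = "(i,j)" and ?a = "(i+1,j)" and ?b = "(i-1,j)" and ?d = "vn i j"
      have E: "hex_adj ?u ?a" "hex_adj ?u ?b" "hex_adj ?u ?d" by (auto simp: adj_iff)
      have D: "?a \<noteq> ?b" "?a \<noteq> ?d" "?b \<noteq> ?d" by (auto simp: vn_def)
      have C2: "\<And>u v. hex_adj u v \<Longrightarrow> f u \<noteq> f v"
        and C3: "\<And>u v w. hex_adj u v \<Longrightarrow> hex_adj u w \<Longrightarrow> v \<noteq> w \<Longrightarrow> \<bar>f u - f v\<bar> \<noteq> \<bar>f u - f w\<bar>"
        and C4: "\<And>u v. hex_adj u v \<Longrightarrow> \<bar>f u - f v\<bar> \<noteq> f u \<and> \<bar>f u - f v\<bar> \<noteq> f v"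
        using pf unfolding proper_td_labeling_def by blast+
      show "f (i,j) \<in> {1..6}" "x \<in> {1..6}" "y \<in> {1..6}" "z \<in> {1..6}" using rg that by auto
      show "okv (f (i,j)) x" "okv (f (i,j)) y" "okv (f (i,j)) z"
        unfolding okv_def that using C2[OF E(1)] C2[OF E(2)] C2[OF E(3)] C4[OF E(1)] C4[OF E(2)] C4[OF E(3)]
        by (simp_all add: abs_minus_commute)
      show "\<bar>x - f (i,j)\<bar> \<noteq> \<bar>y - f (i,j)\<bar>" "\<bar>x - f (i,j)\<bar> \<noteq> \<bar>z - f (i,j)\<bar>" "\<bar>y - f (i,j)\<bar> \<noteq> \<bar>z - f (i,j)\<bar>"
        unfolding that using C3[OF E(1) E(2) D(1)] C3[OF E(1) E(3) D(2)] C3[OF E(2) E(3) D(3)]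
        by (simp_all add: abs_minus_commute)
    qed
    note Q = P[OF refl refl refl]
    have n3: "f (i,j) \<noteq> 3" for i j using Q[of i j] by blast
    have n2: "f (i,j) \<noteq> 2" for i j using Q[of i j] n3[of "i+1" j] n3[of "i-1" j] n3[of "fst (vn i j)" "snd (vn i j)"] by auto
    have n5: "f (i,j) \<noteq> 5" for i j using Q[of i j] n3[of "i+1" j] n3[of "i-1" j] n3[of "fst (vn i j)" "snd (vn i j)"]
       n2[of "i+1" j] n2[of "i-1" j] n2[of "fst (vn i j)" "snd (vn i j)"] by auto
    have n1: "f (i,j) \<noteq> 1" for i j using Q[of i j] n3[of "i+1" j] n3[of "i-1" j] n3[of "fst (vn i j)" "snd (vn i j)"]
       n5[of "i+1" j] n5[of "i-1" j] n5[of "fst (vn i j)" "snd (vn i j)"] by auto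
    have n4: "f (i,j) \<noteq> 4" for i j using Q[of i j] n3[of "i+1" j] n3[of "i-1" j] n3[of "fst (vn i j)" "snd (vn i j)"]
       n1[of "i+1" j] n1[of "i-1" j] n1[of "fst (vn i j)" "snd (vn i j)"] by auto
    have n6: "f (i,j) \<noteq> 6" for i j using Q[of i j] n1[of "i+1" j] n1[of "i-1" j] n1[of "fst (vn i j)" "snd (vn i j)"]
       n2[of "i+1" j] n2[of "i-1" j] n2[of "fst (vn i j)" "snd (vn i j)"] by auto
    show False using rng6[OF rg[of "(0,0)"]] n1[of 0 0] n2[of 0 0] n3[of 0 0] n4[of 0 0] n5[of 0 0] n6[of 0 0] by simp
  qed
  show ?thesis unfolding chi_td_def
  proof (rule Least_equality)
    show "0 < (7::nat) \<and> (\<exists>f. proper_td_labeling hex_adj 7 f)" using up by auto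
  next
    fix y assume "0 < y \<and> (\<exists>f. proper_td_labeling hex_adj y f)"
    then show "7 \<le> y" using low by (meson not_le)
  qed
qed

end
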